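(* For $i=1,2$ let $1\to K_i\xrightarrow{\iota_i}A_i\xrightarrow{\pi_i}H_i\to1$ be exact sequences of Hopf algebras such that $\iota_i(K_i)=\mathcal{HZ}(A_i)$. Suppose $\omega:A_1\to A_2$ is a Hopf algebra isomorphism. Then there exist Hopf algebra isomorphisms $\underline\omega:K_1\to K_2$ and $\overline\omega:H_1\to H_2$ such that $\iota_2\underline\omega=\omega\iota_1$ and $\pi_2\omega=\overline\omega\pi_1$.
   Context: Hopf algebras over a field $k$, with bijective antipode. A sequence $1\to B\xrightarrow{\iota}A\xrightarrow{\pi}H\to1$ of Hopf algebra maps is exact if $\iota$ is injective, $\pi$ surjective, $\operatorname{Ker}\pi=AB^+$ ($B^+=\operatorname{Ker}\varepsilon$) and $B={}^{\mathrm{co}\,\pi}A=\{a:(\pi\otimes\mathrm{id})\Delta(a)=1\otimes a\}$. The Hopf center $\mathcal{HZ}(A)$ is the maximal central Hopf subalgebra of $A$. *)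

theory Defs
  imports Complex_Main
begin

record ('k, 'a) hopf_str =
  scl  :: "'k \<Rightarrow> 'a \<Rightarrow> 'a"
  cmul :: "'a \<Rightarrow> ('a \<times> 'a) list"
  cnt  :: "'a \<Rightarrow> 'k"
  ant  :: "'a \<Rightarrow> 'a"

text \<open>An element of V \<otimes> W is a finite sum
of pure tensors, written as a list of pairs [(v1,w1),...,(vn,wn)] meaning
v1 \<otimes> w1 + ... + vn \<otimes> wn.  Two such formal sums represent the same element of
V \<otimes> W iff every pair of linear functionals f on V and g on W takes the same value
on them (f \<otimes> g); over a field this is exactly equality in the tensor product.\<close>

definition lin_fun :: "('k::field \<Rightarrow> 'v::ab_group_add \<Rightarrow> 'v) \<Rightarrow> ('v \<Rightarrow> 'k) \<Rightarrow> bool" where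
  "lin_fun s f \<longleftrightarrow> Vector_Spaces.linear s ((*)) f"

definition tensor_eq ::
  "('k::field \<Rightarrow> 'v::ab_group_add \<Rightarrow> 'v) \<Rightarrow> ('k \<Rightarrow> 'w::ab_group_add \<Rightarrow> 'w)
    \<Rightarrow> ('v \<times> 'w) list \<Rightarrow> ('v \<times> 'w) list \<Rightarrow> bool" where
  "tensor_eq s t xs ys \<longleftrightarrow>
     (\<forall>f g. lin_fun s f \<and> lin_fun t g \<longrightarrow>
        (\<Sum>(v, w)\<leftarrow>xs. f v * g w) = (\<Sum>(v, w)\<leftarrow>ys. f v * g w))"

definition tensor3_eq ::
  "('k::field \<Rightarrow> 'u::ab_group_add \<Rightarrow> 'u) \<Rightarrow> ('k \<Rightarrow> 'v::ab_group_add \<Rightarrow> 'v)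
    \<Rightarrow> ('k \<Rightarrow> 'w::ab_group_add \<Rightarrow> 'w)
    \<Rightarrow> ('u \<times> 'v \<times> 'w) list \<Rightarrow> ('u \<times> 'v \<times> 'w) list \<Rightarrow> bool" where
  "tensor3_eq r s t xs ys \<longleftrightarrow>
     (\<forall>f g h. lin_fun r f \<and> lin_fun s g \<and> lin_fun t h \<longrightarrow>
        (\<Sum>(u, v, w)\<leftarrow>xs. f u * g v * h w) = (\<Sum>(u, v, w)\<leftarrow>ys. f u * g v * h w))"

text \<open>Hopf algebra axioms (with bijective antipode, the standing assumption).\<close>

definition hopf_algebra :: "('k::field, 'a::ring_1) hopf_str \<Rightarrow> bool" where
  "hopf_algebra A \<longleftrightarrow>
    (let s = scl A; \<Delta> = cmul A; \<epsilon> = cnt A; S = ant A in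
     \<comment> \<open>k-algebra\<close>
     vector_space s \<and>
     (\<forall>c x y. s c (x * y) = s c x * y \<and> s c (x * y) = x * s c y) \<and>
     \<comment> \<open>comultiplication: linear, multiplicative, unital, coassociative\<close>
     (\<forall>x y. tensor_eq s s (\<Delta> (x + y)) (\<Delta> x @ \<Delta> y)) \<and>
     (\<forall>c x. tensor_eq s s (\<Delta> (s c x)) (map (\<lambda>(a, b). (s c a, b)) (\<Delta> x))) \<and>
     (\<forall>x y. tensor_eq s s (\<Delta> (x * y))
              (concat (map (\<lambda>(a, b). map (\<lambda>(a', b'). (a * a', b * b')) (\<Delta> y)) (\<Delta> x)))) \<and>
     tensor_eq s s (\<Delta> 1) [(1, 1)] \<and>
     (\<forall>x. tensor3_eq s s s
            (concat (map (\<lambda>(a, b). map (\<lambda>(a1, a2). (a1, a2, b)) (\<Delta> a)) (\<Delta> x)))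
            (concat (map (\<lambda>(a, b). map (\<lambda>(b1, b2). (a, b1, b2)) (\<Delta> b)) (\<Delta> x)))) \<and>
     \<comment> \<open>counit: algebra map, counit axioms\<close>
     lin_fun s \<epsilon> \<and> (\<forall>x y. \<epsilon> (x * y) = \<epsilon> x * \<epsilon> y) \<and> \<epsilon> 1 = 1 \<and>
     (\<forall>x. (\<Sum>(a, b)\<leftarrow>\<Delta> x. s (\<epsilon> a) b) = x) \<and>
     (\<forall>x. (\<Sum>(a, b)\<leftarrow>\<Delta> x. s (\<epsilon> b) a) = x) \<and>
     \<comment> \<open>antipode: linear, antipode axioms, bijective\<close>
     Vector_Spaces.linear s s S \<and>
     (\<forall>x. (\<Sum>(a, b)\<leftarrow>\<Delta> x. S a * b) = s (\<epsilon> x) 1) \<and>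
     (\<forall>x. (\<Sum>(a, b)\<leftarrow>\<Delta> x. a * S b) = s (\<epsilon> x) 1) \<and>
     bij S)"

text \<open>Hopf algebra maps (= bialgebra maps; they automatically commute with antipodes)
and isomorphisms.\<close>

definition hopf_map ::
  "('k::field, 'a::ring_1) hopf_str \<Rightarrow> ('k, 'b::ring_1) hopf_str \<Rightarrow> ('a \<Rightarrow> 'b) \<Rightarrow> bool" where
  "hopf_map A B f \<longleftrightarrow>
     Vector_Spaces.linear (scl A) (scl B) f \<and>
     (\<forall>x y. f (x * y) = f x * f y) \<and> f 1 = 1 \<and>
     (\<forall>x. tensor_eq (scl B) (scl B) (cmul B (f x)) (map (\<lambda>(a, b). (f a, f b)) (cmul A x))) \<and>
     (\<forall>x. cnt B (f x) = cnt A x)"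

definition hopf_iso ::
  "('k::field, 'a::ring_1) hopf_str \<Rightarrow> ('k, 'b::ring_1) hopf_str \<Rightarrow> ('a \<Rightarrow> 'b) \<Rightarrow> bool" where
  "hopf_iso A B f \<longleftrightarrow> hopf_map A B f \<and> bij f"

definition hopf_subalgebra :: "('k::field, 'a::ring_1) hopf_str \<Rightarrow> 'a set \<Rightarrow> bool" where
  "hopf_subalgebra A B \<longleftrightarrow>
     0 \<in> B \<and> (\<forall>x\<in>B. \<forall>y\<in>B. x + y \<in> B) \<and> (\<forall>c. \<forall>x\<in>B. scl A c x \<in> B) \<and>
     1 \<in> B \<and> (\<forall>x\<in>B. \<forall>y\<in>B. x * y \<in> B) \<and>
     (\<forall>x\<in>B. \<exists>xs. set xs \<subseteq> B \<times> B \<and> tensor_eq (scl A) (scl A) (cmul A x) xs) \<and>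
     (\<forall>x\<in>B. ant A x \<in> B)"

definition central_hopf_subalgebra :: "('k::field, 'a::ring_1) hopf_str \<Rightarrow> 'a set \<Rightarrow> bool" where
  "central_hopf_subalgebra A B \<longleftrightarrow> hopf_subalgebra A B \<and> (\<forall>b\<in>B. \<forall>a. a * b = b * a)"

definition is_hopf_center :: "('k::field, 'a::ring_1) hopf_str \<Rightarrow> 'a set \<Rightarrow> bool" where
  "is_hopf_center A Z \<longleftrightarrow>
     central_hopf_subalgebra A Z \<and> (\<forall>B. central_hopf_subalgebra A B \<longrightarrow> B \<subseteq> Z)"

definition aug_ideal :: "('k::field, 'a::ring_1) hopf_str \<Rightarrow> 'a set \<Rightarrow> 'a set" where
  "aug_ideal A B = {(\<Sum>(a, b)\<leftarrow>xs. a * b) | xs. \<forall>(a, b)\<in>set xs. b \<in> B \<and> cnt A b = 0}"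

definition coinvariants ::
  "('k::field, 'a::ring_1) hopf_str \<Rightarrow> ('k, 'h::ring_1) hopf_str \<Rightarrow> ('a \<Rightarrow> 'h) \<Rightarrow> 'a set" where
  "coinvariants A H \<pi> =
     {a. tensor_eq (scl H) (scl A) (map (\<lambda>(x, y). (\<pi> x, y)) (cmul A a)) [(1, a)]}"

definition hopf_exact ::
  "('k::field, 'b::ring_1) hopf_str \<Rightarrow> ('k, 'a::ring_1) hopf_str \<Rightarrow> ('k, 'h::ring_1) hopf_str
    \<Rightarrow> ('b \<Rightarrow> 'a) \<Rightarrow> ('a \<Rightarrow> 'h) \<Rightarrow> bool" where
  "hopf_exact K A H \<iota> \<pi> \<longleftrightarrow>
     hopf_algebra K \<and> hopf_algebra A \<and> hopf_algebra H \<and>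
     hopf_map K A \<iota> \<and> hopf_map A H \<pi> \<and>
     inj \<iota> \<and> surj \<pi> \<and>
     {a. \<pi> a = 0} = aug_ideal A (range \<iota>) \<and>
     range \<iota> = coinvariants A H \<pi>"

end

theory Submission
  imports Defs
begin


lemma lin_props:
  assumes "Vector_Spaces.linear s t f"
  shows "f (x + y) = f x + f y" "f (s c x) = t c (f x)" "f 0 = 0"
    "f (x - y) = f x - f y" "f (- x) = - f x" "f (sum g F) = (\<Sum>a\<in>F. f (g a))"
proof -
  interpret module_hom s t f using assms by (simp add: module_hom_iff_linear)
  show "f (x + y) = f x + f y" "f (s c x) = t c (f x)" "f 0 = 0"
    "f (x - y) = f x - f y" "f (- x) = - f x" "f (sum g F) = (\<Sum>a\<in>F. f (g a))"
    by (simp_all add: add scale diff neg sum)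
qed
lemma lin_sum_list:
  assumes "Vector_Spaces.linear s t f"
  shows "f (\<Sum>x\<leftarrow>xs. h x) = (\<Sum>x\<leftarrow>xs. f (h x))"
  by (induct xs) (simp_all add: lin_props[OF assms])

lemma vs_field: "vector_space ((*) :: 'k::field \<Rightarrow> 'k \<Rightarrow> 'k)"
  by unfold_locales (simp_all add: algebra_simps)

lemma lin_vs: assumes "Vector_Spaces.linear s t f" shows "vector_space s" "vector_space t"
  using assms unfolding Vector_Spaces.linear_iff by auto

lemma linI:
  assumes "vector_space s" "vector_space t" "\<And>x y. f (x + y) = f x + f y" "\<And>c x. f (s c x) = t c (f x)"
  shows "Vector_Spaces.linear s t f"
  unfolding Vector_Spaces.linear_iff using assms by blast

lemma lin_comp:
  "Vector_Spaces.linear s1 s2 f \<Longrightarrow> Vector_Spaces.linear s2 s3 g \<Longrightarrow> Vector_Spaces.linear s1 s3 (\<lambda>x. g (f x))"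
  using Vector_Spaces.linear_compose[of s1 s2 f s3 g] unfolding comp_def .

lemma basis_rep:
  assumes vs: "vector_space (s :: 'k::field \<Rightarrow> 'v::ab_group_add \<Rightarrow> 'v)"
  shows "\<exists>R. (\<forall>b. lin_fun s (\<lambda>v. R v b)) \<and> (\<forall>v. finite {b. R v b \<noteq> 0}) \<and>
     (\<forall>v F. finite F \<longrightarrow> {b. R v b \<noteq> 0} \<subseteq> F \<longrightarrow> (\<Sum>b\<in>F. s (R v b) b) = v)"
proof -
  interpret vector_space s by fact
  define B where "B = extend_basis {}"
  have ind: "independent B" and sp: "span B = UNIV"
    unfolding B_def by (rule independent_extend_basis[OF independent_empty], rule span_extend_basis[OF independent_empty])
  define R where "R = representation B"
  have "lin_fun s (\<lambda>v. R v b)" for b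
    unfolding lin_fun_def R_def by (rule linear_representation[OF ind sp])
  moreover have "finite {b. R v b \<noteq> 0}" for v
    unfolding R_def by (rule finite_representation)
  moreover have "(\<Sum>b\<in>F. s (R v b) b) = v" if "finite F" "{b. R v b \<noteq> 0} \<subseteq> F" for v F
  proof -
    have "(\<Sum>b\<in>F. s (R v b) b) = (\<Sum>b\<in>{b. R v b \<noteq> 0}. s (R v b) b)"
      by (rule sum.mono_neutral_right[OF that(1) that(2)]) auto
    also have "\<dots> = v" unfolding R_def
      by (rule sum_nonzero_representation_eq[OF ind]) (simp add: sp)
    finally show ?thesis .
  qed
  ultimately show ?thesis by (intro exI[of _ R]) simp
qed

lemma sep:
  assumes vs: "vector_space (s :: 'k::field \<Rightarrow> 'v::ab_group_add \<Rightarrow> 'v)"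
    and h: "\<And>f. lin_fun s f \<Longrightarrow> f x = f y"
  shows "x = y"
proof -
  obtain R where R1: "\<And>b. lin_fun s (\<lambda>v. R v b)" and R2: "\<And>v. finite {b. R v b \<noteq> 0}"
    and R3: "\<And>v F. finite F \<Longrightarrow> {b. R v b \<noteq> 0} \<subseteq> F \<Longrightarrow> (\<Sum>b\<in>F. s (R v b) b) = v"
    using basis_rep[OF vs] by blast
  define F where "F = {b. R x b \<noteq> 0} \<union> {b. R y b \<noteq> 0}"
  have fF: "finite F" using R2 unfolding F_def by auto
  have "x = (\<Sum>b\<in>F. s (R x b) b)" using R3[OF fF] F_def by auto
  also have "\<dots> = (\<Sum>b\<in>F. s (R y b) b)" using h[OF R1] by simp
  also have "\<dots> = y" using R3[OF fF] F_def by auto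
  finally show ?thesis .
qed

lemma sum_list_sum_swap:
  "(\<Sum>x\<leftarrow>xs. \<Sum>b\<in>F. h x b) = (\<Sum>b\<in>F. \<Sum>x\<leftarrow>xs. h x b)"
  by (induct xs) (simp_all add: sum.distrib)

lemma expand:
  assumes R1: "\<And>b. lin_fun t (\<lambda>v. R v b)"
    and R3: "\<And>v F. finite F \<Longrightarrow> {b. R v b \<noteq> 0} \<subseteq> F \<Longrightarrow> (\<Sum>b\<in>F. t (R v b) b) = v"
    and g: "lin_fun t g" and F: "finite F" "{b. R w b \<noteq> 0} \<subseteq> F"
  shows "g w = (\<Sum>b\<in>F. R w b * g b)"
proof -
  have "g w = g (\<Sum>b\<in>F. t (R w b) b)" using R3[OF F] by simp
  also have "\<dots> = (\<Sum>b\<in>F. R w b * g b)"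
    using g unfolding lin_fun_def by (simp add: lin_props)
  finally show ?thesis .
qed

lemma transfer2:
  assumes vs: "vector_space s" "vector_space t" "vector_space r"
    and te: "tensor_eq s t xs ys"
    and l1: "\<And>w. Vector_Spaces.linear s r (\<lambda>v. \<beta> v w)"
    and l2: "\<And>v. Vector_Spaces.linear t r (\<beta> v)"
  shows "(\<Sum>(v, w)\<leftarrow>xs. \<beta> v w) = (\<Sum>(v, w)\<leftarrow>ys. \<beta> v w)"
proof (rule sep[OF vs(3)])
  fix \<mu> assume lam: "lin_fun r \<mu>"
  obtain R where R1: "\<And>b. lin_fun t (\<lambda>v. R v b)" and R2: "\<And>v. finite {b. R v b \<noteq> 0}"
    and R3: "\<And>v F. finite F \<Longrightarrow> {b. R v b \<noteq> 0} \<subseteq> F \<Longrightarrow> (\<Sum>b\<in>F. t (R v b) b) = v"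
    using basis_rep[OF vs(2)] by blast
  define F where "F = (\<Union>w\<in>snd ` set (xs @ ys). {b. R w b \<noteq> 0})"
  have fF: "finite F" unfolding F_def using R2 by auto
  have lg: "lin_fun t (\<lambda>w. \<mu> (\<beta> v w))" for v
    using lin_comp[OF l2 lam[unfolded lin_fun_def]] unfolding lin_fun_def .
  have lf: "lin_fun s (\<lambda>v. \<mu> (\<beta> v w))" for w
    using lin_comp[OF l1 lam[unfolded lin_fun_def]] unfolding lin_fun_def .
  have key: "(\<Sum>(v, w)\<leftarrow>zs. \<mu> (\<beta> v w)) = (\<Sum>b\<in>F. \<Sum>(v, w)\<leftarrow>zs. \<mu> (\<beta> v b) * R w b)"
    if "set zs \<subseteq> set (xs @ ys)" for zs
  proof -
    have "(\<Sum>(v, w)\<leftarrow>zs. \<mu> (\<beta> v w)) = (\<Sum>(v, w)\<leftarrow>zs. \<Sum>b\<in>F. \<mu> (\<beta> v b) * R w b)"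
    proof (rule arg_cong[where f=sum_list], rule map_cong[OF refl], clarify)
      fix v w assume "(v, w) \<in> set zs"
      then have "{b. R w b \<noteq> 0} \<subseteq> F" using that unfolding F_def by force
      then show "\<mu> (\<beta> v w) = (\<Sum>b\<in>F. \<mu> (\<beta> v b) * R w b)"
        using expand[OF R1 R3 lg fF] by (simp add: mult.commute)
    qed
    also have "\<dots> = (\<Sum>b\<in>F. \<Sum>(v, w)\<leftarrow>zs. \<mu> (\<beta> v b) * R w b)"
      using sum_list_sum_swap[where h="\<lambda>p b. \<mu> (\<beta> (fst p) b) * R (snd p) b" and xs=zs and F=F]
      by (simp add: case_prod_beta')
    finally show ?thesis .
  qed
  have "\<mu> (\<Sum>(v, w)\<leftarrow>xs. \<beta> v w) = (\<Sum>(v, w)\<leftarrow>xs. \<mu> (\<beta> v w))"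
    using lin_sum_list[OF lam[unfolded lin_fun_def], of "\<lambda>p. case p of (v, w) \<Rightarrow> \<beta> v w" xs]
    by (simp add: case_prod_beta')
  also have "\<dots> = (\<Sum>b\<in>F. \<Sum>(v, w)\<leftarrow>xs. \<mu> (\<beta> v b) * R w b)" by (rule key) auto
  also have "\<dots> = (\<Sum>b\<in>F. \<Sum>(v, w)\<leftarrow>ys. \<mu> (\<beta> v b) * R w b)"
    using te lf R1 unfolding tensor_eq_def by (intro sum.cong refl) blast
  also have "\<dots> = (\<Sum>(v, w)\<leftarrow>ys. \<mu> (\<beta> v w))" by (rule key[symmetric]) auto
  also have "\<dots> = \<mu> (\<Sum>(v, w)\<leftarrow>ys. \<beta> v w)"
    using lin_sum_list[OF lam[unfolded lin_fun_def], of "\<lambda>p. case p of (v, w) \<Rightarrow> \<beta> v w" ys]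
    by (simp add: case_prod_beta')
  finally show "\<mu> (\<Sum>(v, w)\<leftarrow>xs. \<beta> v w) = \<mu> (\<Sum>(v, w)\<leftarrow>ys. \<beta> v w)" .
qed



lemma transfer3:
  assumes vs: "vector_space s" "vector_space r"
    and te: "tensor3_eq s s s xs ys"
    and l1: "\<And>v w. Vector_Spaces.linear s r (\<lambda>u. \<gamma> u v w)"
    and l2: "\<And>u w. Vector_Spaces.linear s r (\<lambda>v. \<gamma> u v w)"
    and l3: "\<And>u v. Vector_Spaces.linear s r (\<lambda>w. \<gamma> u v w)"
  shows "(\<Sum>(u, v, w)\<leftarrow>xs. \<gamma> u v w) = (\<Sum>(u, v, w)\<leftarrow>ys. \<gamma> u v w)"
proof (rule sep[OF vs(2)])
  fix \<mu> assume lam: "lin_fun r \<mu>"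
  obtain R where R1: "\<And>b. lin_fun s (\<lambda>v. R v b)" and R2: "\<And>v. finite {b. R v b \<noteq> 0}"
    and R3: "\<And>v F. finite F \<Longrightarrow> {b. R v b \<noteq> 0} \<subseteq> F \<Longrightarrow> (\<Sum>b\<in>F. s (R v b) b) = v"
    using basis_rep[OF vs(1)] by blast
  define F where "F = (\<Union>p\<in>set (xs @ ys). {b. R (fst (snd p)) b \<noteq> 0} \<union> {b. R (snd (snd p)) b \<noteq> 0})"
  have fF: "finite F" unfolding F_def using R2 by auto
  have lf: "lin_fun s (\<lambda>u. \<mu> (\<gamma> u v w))" for v w
    using lin_comp[OF l1 lam[unfolded lin_fun_def]] unfolding lin_fun_def .
  have lg: "lin_fun s (\<lambda>v. \<mu> (\<gamma> u v w))" for u w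
    using lin_comp[OF l2 lam[unfolded lin_fun_def]] unfolding lin_fun_def .
  have lh: "lin_fun s (\<lambda>w. \<mu> (\<gamma> u v w))" for u v
    using lin_comp[OF l3 lam[unfolded lin_fun_def]] unfolding lin_fun_def .
  have key: "(\<Sum>(u, v, w)\<leftarrow>zs. \<mu> (\<gamma> u v w)) =
      (\<Sum>q\<in>F \<times> F. \<Sum>(u, v, w)\<leftarrow>zs. \<mu> (\<gamma> u (fst q) (snd q)) * R v (fst q) * R w (snd q))"
    if "set zs \<subseteq> set (xs @ ys)" for zs
  proof -
    have "(\<Sum>(u, v, w)\<leftarrow>zs. \<mu> (\<gamma> u v w)) =
       (\<Sum>(u, v, w)\<leftarrow>zs. \<Sum>q\<in>F \<times> F. \<mu> (\<gamma> u (fst q) (snd q)) * R v (fst q) * R w (snd q))"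
    proof (rule arg_cong[where f=sum_list], rule map_cong[OF refl], clarify)
      fix u v w assume "(u, v, w) \<in> set zs"
      then have Fv: "{b. R v b \<noteq> 0} \<subseteq> F" and Fw: "{b. R w b \<noteq> 0} \<subseteq> F"
        using that unfolding F_def by force+
      have "\<mu> (\<gamma> u v w) = (\<Sum>b\<in>F. R v b * \<mu> (\<gamma> u b w))"
        by (rule expand[OF R1 R3 lg fF Fv])
      also have "\<dots> = (\<Sum>b\<in>F. R v b * (\<Sum>c\<in>F. R w c * \<mu> (\<gamma> u b c)))"
        by (intro sum.cong refl arg_cong[where f="\<lambda>x. _ * x"] expand[OF R1 R3 lh fF Fw])
      also have "\<dots> = (\<Sum>b\<in>F. \<Sum>c\<in>F. \<mu> (\<gamma> u b c) * R v b * R w c)"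
        by (simp add: sum_distrib_left mult_ac)
      also have "\<dots> = (\<Sum>q\<in>F \<times> F. \<mu> (\<gamma> u (fst q) (snd q)) * R v (fst q) * R w (snd q))"
        by (simp add: sum.cartesian_product case_prod_beta')
      finally show "\<mu> (\<gamma> u v w) = (\<Sum>q\<in>F \<times> F. \<mu> (\<gamma> u (fst q) (snd q)) * R v (fst q) * R w (snd q))" .
    qed
    also have "\<dots> = (\<Sum>q\<in>F \<times> F. \<Sum>(u, v, w)\<leftarrow>zs. \<mu> (\<gamma> u (fst q) (snd q)) * R v (fst q) * R w (snd q))"
      using sum_list_sum_swap[where h="\<lambda>p q. \<mu> (\<gamma> (fst p) (fst q) (snd q)) * R (fst (snd p)) (fst q) * R (snd (snd p)) (snd q)" and xs=zs and F="F \<times> F"]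
      by (simp add: case_prod_beta')
    finally show ?thesis .
  qed
  have "\<mu> (\<Sum>(u, v, w)\<leftarrow>xs. \<gamma> u v w) = (\<Sum>(u, v, w)\<leftarrow>xs. \<mu> (\<gamma> u v w))"
    using lin_sum_list[OF lam[unfolded lin_fun_def], of "\<lambda>p. case p of (u, v, w) \<Rightarrow> \<gamma> u v w" xs]
    by (simp add: case_prod_beta')
  also have "\<dots> = (\<Sum>q\<in>F \<times> F. \<Sum>(u, v, w)\<leftarrow>xs. \<mu> (\<gamma> u (fst q) (snd q)) * R v (fst q) * R w (snd q))"
    by (rule key) auto
  also have "\<dots> = (\<Sum>q\<in>F \<times> F. \<Sum>(u, v, w)\<leftarrow>ys. \<mu> (\<gamma> u (fst q) (snd q)) * R v (fst q) * R w (snd q))"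
  proof (rule sum.cong[OF refl])
    fix q
    show "(\<Sum>(u, v, w)\<leftarrow>xs. \<mu> (\<gamma> u (fst q) (snd q)) * R v (fst q) * R w (snd q)) =
          (\<Sum>(u, v, w)\<leftarrow>ys. \<mu> (\<gamma> u (fst q) (snd q)) * R v (fst q) * R w (snd q))"
      using te lf[of "fst q" "snd q"] R1[of "fst q"] R1[of "snd q"] unfolding tensor3_eq_def by blast
  qed
  also have "\<dots> = (\<Sum>(u, v, w)\<leftarrow>ys. \<mu> (\<gamma> u v w))" by (rule key[symmetric]) auto
  also have "\<dots> = \<mu> (\<Sum>(u, v, w)\<leftarrow>ys. \<gamma> u v w)"
    using lin_sum_list[OF lam[unfolded lin_fun_def], of "\<lambda>p. case p of (u, v, w) \<Rightarrow> \<gamma> u v w" ys]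
    by (simp add: case_prod_beta')
  finally show "\<mu> (\<Sum>(u, v, w)\<leftarrow>xs. \<gamma> u v w) = \<mu> (\<Sum>(u, v, w)\<leftarrow>ys. \<gamma> u v w)" .
qed



lemma hopfD:
  assumes "hopf_algebra A"
  shows "vector_space (scl A)"
    "\<And>c x y. scl A c (x * y) = scl A c x * y"
    "\<And>c x y. scl A c (x * y) = x * scl A c y"
    "\<And>x. tensor3_eq (scl A) (scl A) (scl A)
            (concat (map (\<lambda>(a, b). map (\<lambda>(a1, a2). (a1, a2, b)) (cmul A a)) (cmul A x)))
            (concat (map (\<lambda>(a, b). map (\<lambda>(b1, b2). (a, b1, b2)) (cmul A b)) (cmul A x)))"
    "lin_fun (scl A) (cnt A)"
    "\<And>x. (\<Sum>(a, b)\<leftarrow>cmul A x. scl A (cnt A a) b) = x"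
    "\<And>x. (\<Sum>(a, b)\<leftarrow>cmul A x. scl A (cnt A b) a) = x"
    "Vector_Spaces.linear (scl A) (scl A) (ant A)"
    "\<And>x. (\<Sum>(a, b)\<leftarrow>cmul A x. ant A a * b) = scl A (cnt A x) 1"
    "\<And>x. (\<Sum>(a, b)\<leftarrow>cmul A x. a * ant A b) = scl A (cnt A x) 1"
    "\<And>x y. cnt A (x * y) = cnt A x * cnt A y" "cnt A 1 = 1"
    "bij (ant A)"
  using assms unfolding hopf_algebra_def Let_def by blast+

lemma hmapD:
  assumes "hopf_map A B f"
  shows "Vector_Spaces.linear (scl A) (scl B) f" "\<And>x y. f (x * y) = f x * f y" "f 1 = 1"
     "\<And>x. tensor_eq (scl B) (scl B) (cmul B (f x)) (map (\<lambda>(a, b). (f a, f b)) (cmul A x))"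
     "\<And>x. cnt B (f x) = cnt A x"
  using assms unfolding hopf_map_def by blast+

lemma tensor_eq_sym: "tensor_eq s t xs ys \<Longrightarrow> tensor_eq s t ys xs"
  unfolding tensor_eq_def by metis

lemma tensor_eq_trans: "tensor_eq s t xs ys \<Longrightarrow> tensor_eq s t ys zs \<Longrightarrow> tensor_eq s t xs zs"
  unfolding tensor_eq_def by metis

lemma lin_mult_right:
  assumes "hopf_algebra A"
  shows "Vector_Spaces.linear (scl A) (scl A) (\<lambda>x. x * C)"
  by (rule linI[OF hopfD(1)[OF assms] hopfD(1)[OF assms]])
     (simp_all add: distrib_right hopfD(2)[OF assms])

lemma lin_mult_left:
  assumes "hopf_algebra A"
  shows "Vector_Spaces.linear (scl A) (scl A) (\<lambda>x. C * x)"
  by (rule linI[OF hopfD(1)[OF assms] hopfD(1)[OF assms]])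
     (simp_all add: distrib_left hopfD(3)[OF assms])

lemma sum_list_concat_map:
  "(\<Sum>p\<leftarrow>concat (map h xs). g p) = (\<Sum>x\<leftarrow>xs. \<Sum>p\<leftarrow>h x. g p)"
  by (induct xs) simp_all

lemma antipode_comm:
  assumes hA: "hopf_algebra A" and hB: "hopf_algebra B" and hf: "hopf_map A B f"
  shows "ant B (f x) = f (ant A x)"
proof -
  let ?s = "scl A" and ?t = "scl B" and ?D = "cmul A" and ?e = "cnt A" and ?S = "ant A" and ?S' = "ant B"
  define u where "u = (\<lambda>x. ?S' (f x))"
  define v where "v = (\<lambda>x. f (?S x))"
  note A = hopfD[OF hA] and B = hopfD[OF hB] and F = hmapD[OF hf]
  have lu: "Vector_Spaces.linear ?s ?t u" unfolding u_def by (rule lin_comp[OF F(1) B(8)])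
  have lv: "Vector_Spaces.linear ?s ?t v" unfolding v_def by (rule lin_comp[OF A(8) F(1)])
  have le: "Vector_Spaces.linear ?s (*) ?e" using A(5) unfolding lin_fun_def .
  have s1: "u x = (\<Sum>(a, b)\<leftarrow>?D x. ?t (?e b) (u a))"
  proof -
    have "u x = u (\<Sum>(a, b)\<leftarrow>?D x. ?s (?e b) a)" using A(7)[of x] by simp
    also have "\<dots> = (\<Sum>(a, b)\<leftarrow>?D x. ?t (?e b) (u a))"
      by (simp add: lin_sum_list[OF lu] case_prod_beta' lin_props[OF lu])
    finally show ?thesis .
  qed
  have s2: "?t (?e b) (u a) = (\<Sum>(c, d)\<leftarrow>?D b. u a * (f c * v d))" for a b
  proof -
    have "(\<Sum>(c, d)\<leftarrow>?D b. f c * v d) = f (\<Sum>(c, d)\<leftarrow>?D b. c * ?S d)"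
      by (simp add: lin_sum_list[OF F(1)] case_prod_beta' F(2) v_def)
    also have "\<dots> = ?t (?e b) 1" using A(10)[of b] by (simp add: lin_props[OF F(1)] F(3))
    finally have "(\<Sum>(c, d)\<leftarrow>?D b. f c * v d) = ?t (?e b) 1" .
    then have "(\<Sum>(c, d)\<leftarrow>?D b. u a * (f c * v d)) = u a * ?t (?e b) 1"
      using sum_list_const_mult[of "u a" "\<lambda>p. f (fst p) * v (snd p)" "?D b"]
      by (simp add: case_prod_beta')
    also have "\<dots> = ?t (?e b) (u a)" using B(3)[of "?e b" "u a" 1] by simp
    finally show ?thesis by simp
  qed
  define L1 where "L1 = concat (map (\<lambda>(a, b). map (\<lambda>(a1, a2). (a1, a2, b)) (?D a)) (?D x))"
  define L2 where "L2 = concat (map (\<lambda>(a, b). map (\<lambda>(b1, b2). (a, b1, b2)) (?D b)) (?D x))"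
  define \<gamma> where "\<gamma> = (\<lambda>p q r. u p * (f q * v r))"
  have ux: "u x = (\<Sum>(p, q, r)\<leftarrow>L2. \<gamma> p q r)"
    unfolding s1 s2 L2_def \<gamma>_def sum_list_concat_map
    by (simp add: case_prod_beta' o_def)
  have s3: "(\<Sum>(p, q, r)\<leftarrow>L1. \<gamma> p q r) = (\<Sum>(p, q, r)\<leftarrow>L2. \<gamma> p q r)"
  proof (rule transfer3[OF A(1) B(1)])
    show "tensor3_eq ?s ?s ?s L1 L2" unfolding L1_def L2_def by (rule A(4))
    show "Vector_Spaces.linear ?s ?t (\<lambda>p. \<gamma> p q r)" for q r
      unfolding \<gamma>_def by (rule lin_comp[OF lu lin_mult_right[OF hB]])
    show "Vector_Spaces.linear ?s ?t (\<lambda>q. \<gamma> p q r)" for p r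
      unfolding \<gamma>_def by (rule lin_comp[OF lin_comp[OF F(1) lin_mult_right[OF hB]] lin_mult_left[OF hB]])
    show "Vector_Spaces.linear ?s ?t (\<lambda>r. \<gamma> p q r)" for p q
      unfolding \<gamma>_def by (rule lin_comp[OF lin_comp[OF lv lin_mult_left[OF hB]] lin_mult_left[OF hB]])
  qed
  have s4: "(\<Sum>(a1, a2)\<leftarrow>?D a. u a1 * f a2) = ?t (?e a) 1" for a
  proof -
    have "(\<Sum>(a1, a2)\<leftarrow>?D a. u a1 * f a2) = (\<Sum>(p, q)\<leftarrow>map (\<lambda>(a, b). (f a, f b)) (?D a). ?S' p * q)"
      by (simp add: u_def case_prod_beta' o_def)
    also have "\<dots> = (\<Sum>(p, q)\<leftarrow>cmul B (f a). ?S' p * q)"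
    proof (rule transfer2[OF B(1) B(1) B(1)])
      show "tensor_eq ?t ?t (map (\<lambda>(a, b). (f a, f b)) (?D a)) (cmul B (f a))"
        by (rule tensor_eq_sym[OF F(4)])
      show "Vector_Spaces.linear ?t ?t (\<lambda>p. ?S' p * q)" for q
        by (rule lin_comp[OF B(8) lin_mult_right[OF hB]])
      show "Vector_Spaces.linear ?t ?t (\<lambda>q. ?S' p * q)" for p
        by (rule lin_mult_left[OF hB])
    qed
    also have "\<dots> = ?t (?e a) 1" using B(9)[of "f a"] F(5)[of a] by simp
    finally show ?thesis .
  qed
  have s5: "(\<Sum>(p, q, r)\<leftarrow>L1. \<gamma> p q r) = (\<Sum>(a, b)\<leftarrow>?D x. ?t (?e a) (v b))"
  proof -
    have "(\<Sum>(p, q, r)\<leftarrow>L1. \<gamma> p q r) = (\<Sum>(a, b)\<leftarrow>?D x. \<Sum>(a1, a2)\<leftarrow>?D a. u a1 * f a2 * v b)"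
      unfolding L1_def \<gamma>_def sum_list_concat_map
      by (simp add: case_prod_beta' o_def mult.assoc)
    also have "\<dots> = (\<Sum>(a, b)\<leftarrow>?D x. (\<Sum>(a1, a2)\<leftarrow>?D a. u a1 * f a2) * v b)"
      by (simp add: case_prod_beta' sum_list_mult_const)
    also have "\<dots> = (\<Sum>(a, b)\<leftarrow>?D x. ?t (?e a) (v b))"
    proof -
      have s4': "(\<Sum>p\<leftarrow>?D a. u (fst p) * f (snd p)) = ?t (?e a) 1" for a
        using s4[of a] by (simp add: case_prod_beta')
      show ?thesis by (simp add: s4' case_prod_beta' B(2)[symmetric])
    qed
    finally show ?thesis .
  qed
  have s6: "(\<Sum>(a, b)\<leftarrow>?D x. ?t (?e a) (v b)) = v x"
  proof -
    have "(\<Sum>(a, b)\<leftarrow>?D x. ?t (?e a) (v b)) = v (\<Sum>(a, b)\<leftarrow>?D x. ?s (?e a) b)"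
      by (simp add: lin_sum_list[OF lv] case_prod_beta' lin_props[OF lv])
    also have "\<dots> = v x" using A(6)[of x] by simp
    finally show ?thesis .
  qed
  have "u x = v x" using ux s3 s5 s6 by simp
  then show ?thesis unfolding u_def v_def .
qed



lemma tensor_eq_map:
  assumes f: "Vector_Spaces.linear s1 s2 f" and g: "Vector_Spaces.linear t1 t2 g"
    and te: "tensor_eq s1 t1 xs ys"
  shows "tensor_eq s2 t2 (map (\<lambda>(a, b). (f a, g b)) xs) (map (\<lambda>(a, b). (f a, g b)) ys)"
  unfolding tensor_eq_def
proof (intro allI impI)
  fix F G assume "lin_fun s2 F \<and> lin_fun t2 G"
  then have "lin_fun s1 (\<lambda>x. F (f x))" "lin_fun t1 (\<lambda>x. G (g x))"
    unfolding lin_fun_def using lin_comp[OF f] lin_comp[OF g] by blast+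
  then have "(\<Sum>(v, w)\<leftarrow>xs. F (f v) * G (g w)) = (\<Sum>(v, w)\<leftarrow>ys. F (f v) * G (g w))"
    using te unfolding tensor_eq_def by blast
  then show "(\<Sum>(v, w)\<leftarrow>map (\<lambda>(a, b). (f a, g b)) xs. F v * G w) =
             (\<Sum>(v, w)\<leftarrow>map (\<lambda>(a, b). (f a, g b)) ys. F v * G w)"
    by (simp add: case_prod_beta' o_def)
qed

lemma map_map_pair:
  "map (\<lambda>(a, b). (f a, g b)) (map (\<lambda>(a, b). (h a, k b)) xs) = map (\<lambda>(a, b). (f (h a), g (k b))) xs"
  by (induct xs) auto

lemma hopf_iso_inv:
  assumes hA: "hopf_algebra A" and hB: "hopf_algebra B" and iso: "hopf_iso A B f"
  shows "hopf_iso B A (inv f)"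
proof -
  have hf: "hopf_map A B f" and bf: "bij f" using iso unfolding hopf_iso_def by auto
  note F = hmapD[OF hf]
  have fi: "f (inv f y) = y" for y using bf by (simp add: bij_is_surj surj_f_inv_f)
  have if_: "inv f (f x) = x" for x using bf by (simp add: bij_is_inj)
  have li: "Vector_Spaces.linear (scl B) (scl A) (inv f)"
  proof (rule linI[OF hopfD(1)[OF hB] hopfD(1)[OF hA]])
    show "inv f (x + y) = inv f x + inv f y" for x y
      by (metis fi if_ lin_props(1)[OF F(1)])
    show "inv f (scl B c x) = scl A c (inv f x)" for c x
      by (metis fi if_ lin_props(2)[OF F(1)])
  qed
  have "hopf_map B A (inv f)"
    unfolding hopf_map_def
  proof (intro conjI allI li)
    show "inv f (x * y) = inv f x * inv f y" for x y by (metis fi if_ F(2))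
    show "inv f 1 = 1" by (metis if_ F(3))
    show "cnt A (inv f x) = cnt B x" for x by (metis fi F(5))
    show "tensor_eq (scl A) (scl A) (cmul A (inv f y)) (map (\<lambda>(a, b). (inv f a, inv f b)) (cmul B y))" for y
    proof -
      have "tensor_eq (scl A) (scl A) (map (\<lambda>(a, b). (inv f a, inv f b)) (cmul B (f (inv f y))))
             (map (\<lambda>(a, b). (inv f a, inv f b)) (map (\<lambda>(a, b). (f a, f b)) (cmul A (inv f y))))"
        by (rule tensor_eq_map[OF li li F(4)])
      then show ?thesis unfolding map_map_pair if_ fi
        by (simp add: case_prod_beta' tensor_eq_sym)
    qed
  qed
  moreover have "bij (inv f)" using bf by (simp add: bij_imp_bij_inv)
  ultimately show ?thesis unfolding hopf_iso_def by blast
qed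

lemma image_central:
  assumes hA: "hopf_algebra A" and hB: "hopf_algebra B" and iso: "hopf_iso A B f"
    and C: "central_hopf_subalgebra A C"
  shows "central_hopf_subalgebra B (f ` C)"
proof -
  have hf: "hopf_map A B f" and bf: "bij f" using iso unfolding hopf_iso_def by auto
  note F = hmapD[OF hf]
  have fi: "f (inv f y) = y" for y using bf by (simp add: bij_is_surj surj_f_inv_f)
  have C1: "0 \<in> C" "\<And>x y. x \<in> C \<Longrightarrow> y \<in> C \<Longrightarrow> x + y \<in> C" "\<And>c x. x \<in> C \<Longrightarrow> scl A c x \<in> C"
    "1 \<in> C" "\<And>x y. x \<in> C \<Longrightarrow> y \<in> C \<Longrightarrow> x * y \<in> C"
    "\<And>x. x \<in> C \<Longrightarrow> \<exists>xs. set xs \<subseteq> C \<times> C \<and> tensor_eq (scl A) (scl A) (cmul A x) xs"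
    "\<And>x. x \<in> C \<Longrightarrow> ant A x \<in> C" "\<And>b a. b \<in> C \<Longrightarrow> a * b = b * a"
    using C unfolding central_hopf_subalgebra_def hopf_subalgebra_def by blast+
  have "0 \<in> f ` C" using C1(1) lin_props(3)[OF F(1)] by (metis image_eqI)
  moreover have "\<forall>x\<in>f ` C. \<forall>y\<in>f ` C. x + y \<in> f ` C"
    using C1(2) lin_props(1)[OF F(1)] by (metis (no_types, lifting) image_iff)
  moreover have "\<forall>c. \<forall>x\<in>f ` C. scl B c x \<in> f ` C"
    using C1(3) lin_props(2)[OF F(1)] by (metis (no_types, lifting) image_iff)
  moreover have "1 \<in> f ` C" using C1(4) F(3) by (metis image_eqI)
  moreover have "\<forall>x\<in>f ` C. \<forall>y\<in>f ` C. x * y \<in> f ` C"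
    using C1(5) F(2) by (metis (no_types, lifting) image_iff)
  moreover have "\<forall>x\<in>f ` C. \<exists>xs. set xs \<subseteq> f ` C \<times> f ` C \<and> tensor_eq (scl B) (scl B) (cmul B x) xs"
  proof
    fix y assume "y \<in> f ` C"
    then obtain x where x: "x \<in> C" "y = f x" by blast
    obtain xs where xs: "set xs \<subseteq> C \<times> C" "tensor_eq (scl A) (scl A) (cmul A x) xs"
      using C1(6)[OF x(1)] by blast
    have "tensor_eq (scl B) (scl B) (cmul B y) (map (\<lambda>(a, b). (f a, f b)) xs)"
      using tensor_eq_trans[OF F(4)[of x] tensor_eq_map[OF F(1) F(1) xs(2)]] x(2) by simp
    moreover have "set (map (\<lambda>(a, b). (f a, f b)) xs) \<subseteq> f ` C \<times> f ` C" using xs(1) by auto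
    ultimately show "\<exists>xs. set xs \<subseteq> f ` C \<times> f ` C \<and> tensor_eq (scl B) (scl B) (cmul B y) xs" by blast
  qed
  moreover have "\<forall>x\<in>f ` C. ant B x \<in> f ` C"
    using C1(7) antipode_comm[OF hA hB hf] by (metis (no_types, lifting) image_iff)
  moreover have "\<forall>b\<in>f ` C. \<forall>a. a * b = b * a"
  proof (intro ballI allI)
    fix b a assume "b \<in> f ` C"
    then obtain x where x: "x \<in> C" "b = f x" by blast
    have "a * b = f (inv f a * x)" using F(2) fi x(2) by metis
    also have "\<dots> = f (x * inv f a)" using C1(8)[OF x(1)] by metis
    also have "\<dots> = b * a" using F(2) fi x(2) by metis
    finally show "a * b = b * a" .
  qed
  ultimately show ?thesis unfolding central_hopf_subalgebra_def hopf_subalgebra_def by blast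
qed

lemma exactD:
  assumes "hopf_exact K A H \<iota> \<pi>"
  shows "hopf_algebra K" "hopf_algebra A" "hopf_algebra H" "hopf_map K A \<iota>" "hopf_map A H \<pi>"
    "inj \<iota>" "surj \<pi>" "{a. \<pi> a = 0} = aug_ideal A (range \<iota>)"
  using assms unfolding hopf_exact_def by blast+

lemma wd:
  assumes e1: "hopf_exact K A H \<iota> \<pi>" and e2: "hopf_exact K' A' H' \<iota>' \<pi>'"
    and hw: "hopf_map A A' w" and sub: "w ` range \<iota> \<subseteq> range \<iota>'"
    and eq: "\<pi> a = \<pi> a'"
  shows "\<pi>' (w a) = \<pi>' (w a')"
proof -
  note E1 = exactD[OF e1] and E2 = exactD[OF e2] and W = hmapD[OF hw]
  note P1 = hmapD[OF E1(5)] and P2 = hmapD[OF E2(5)]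
  have "\<pi> (a - a') = 0" using eq lin_props(4)[OF P1(1)] by simp
  then have "a - a' \<in> aug_ideal A (range \<iota>)" using E1(8) by blast
  then obtain xs where xs: "a - a' = (\<Sum>(p, q)\<leftarrow>xs. p * q)"
    and xq: "\<forall>(p, q)\<in>set xs. q \<in> range \<iota> \<and> cnt A q = 0"
    unfolding aug_ideal_def by blast
  have "w (a - a') = (\<Sum>(p, q)\<leftarrow>map (\<lambda>(p, q). (w p, w q)) xs. p * q)"
    unfolding xs by (simp add: lin_sum_list[OF W(1)] case_prod_beta' o_def W(2))
  moreover have "\<forall>(p, q)\<in>set (map (\<lambda>(p, q). (w p, w q)) xs). q \<in> range \<iota>' \<and> cnt A' q = 0"
  proof
    fix pq assume "pq \<in> set (map (\<lambda>(p, q). (w p, w q)) xs)"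
    then obtain p q where pq: "(p, q) \<in> set xs" "pq = (w p, w q)" by auto
    then have q: "q \<in> range \<iota>" "cnt A q = 0" using xq by auto
    have "w q \<in> range \<iota>'" using sub q(1) by (rule subsetD[OF _ imageI])
    moreover have "cnt A' (w q) = 0" using W(5)[of q] q(2) by simp
    ultimately show "case pq of (p, q) \<Rightarrow> q \<in> range \<iota>' \<and> cnt A' q = 0" using pq(2) by simp
  qed
  ultimately have "w (a - a') \<in> aug_ideal A' (range \<iota>')" unfolding aug_ideal_def by blast
  then have "\<pi>' (w (a - a')) = 0" using E2(8) by blast
  then show ?thesis using lin_props(4)[OF W(1)] lin_props(4)[OF P2(1)] by simp
qed



theorem proposition2p10:
  fixes K1 :: "('k::field, 'k1::ring_1) hopf_str" and A1 :: "('k, 'a1::ring_1) hopf_str"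
    and H1 :: "('k, 'h1::ring_1) hopf_str"
    and K2 :: "('k, 'k2::ring_1) hopf_str" and A2 :: "('k, 'a2::ring_1) hopf_str"
    and H2 :: "('k, 'h2::ring_1) hopf_str"
    and \<iota>1 :: "'k1 \<Rightarrow> 'a1" and \<pi>1 :: "'a1 \<Rightarrow> 'h1"
    and \<iota>2 :: "'k2 \<Rightarrow> 'a2" and \<pi>2 :: "'a2 \<Rightarrow> 'h2"
    and \<omega> :: "'a1 \<Rightarrow> 'a2"
  assumes ex1: "hopf_exact K1 A1 H1 \<iota>1 \<pi>1"
    and ex2: "hopf_exact K2 A2 H2 \<iota>2 \<pi>2"
    and c1: "is_hopf_center A1 (range \<iota>1)"
    and c2: "is_hopf_center A2 (range \<iota>2)"
    and iso: "hopf_iso A1 A2 \<omega>"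
  shows "\<exists>\<omega>u \<omega>o. hopf_iso K1 K2 \<omega>u \<and> hopf_iso H1 H2 \<omega>o \<and>
           \<iota>2 \<circ> \<omega>u = \<omega> \<circ> \<iota>1 \<and> \<pi>2 \<circ> \<omega> = \<omega>o \<circ> \<pi>1"
proof -
  note E1 = exactD[OF ex1] and E2 = exactD[OF ex2]
  have hw: "hopf_map A1 A2 \<omega>" and bw: "bij \<omega>" using iso unfolding hopf_iso_def by auto
  have iso': "hopf_iso A2 A1 (inv \<omega>)" by (rule hopf_iso_inv[OF E1(2) E2(2) iso])
  have hw': "hopf_map A2 A1 (inv \<omega>)" using iso' unfolding hopf_iso_def by auto
  note W = hmapD[OF hw] and W' = hmapD[OF hw']
  have fi: "\<omega> (inv \<omega> y) = y" for y using bw by (simp add: bij_is_surj surj_f_inv_f)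
  have if_: "inv \<omega> (\<omega> x) = x" for x using bw by (simp add: bij_is_inj)
  have sub1: "\<omega> ` range \<iota>1 \<subseteq> range \<iota>2"
    using c2 image_central[OF E1(2) E2(2) iso] c1 unfolding is_hopf_center_def by blast
  have sub2: "inv \<omega> ` range \<iota>2 \<subseteq> range \<iota>1"
    using c1 image_central[OF E2(2) E1(2) iso'] c2 unfolding is_hopf_center_def by blast
  have in2: "\<omega> (\<iota>1 k) \<in> range \<iota>2" for k using sub1 by blast
  define wu where "wu = (\<lambda>k. inv \<iota>2 (\<omega> (\<iota>1 k)))"
  have wu: "\<iota>2 (wu k) = \<omega> (\<iota>1 k)" for k
    unfolding wu_def using in2[of k] by (simp add: f_inv_into_f)
  note I1 = hmapD[OF E1(4)] and I2 = hmapD[OF E2(4)]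
  have inj2: "\<iota>2 x = \<iota>2 y \<Longrightarrow> x = y" for x y using E2(6) by (simp add: inj_eq)
  have lwu: "Vector_Spaces.linear (scl K1) (scl K2) wu"
  proof (rule linI[OF hopfD(1)[OF E1(1)] hopfD(1)[OF E2(1)]])
    show "wu (x + y) = wu x + wu y" for x y
      by (rule inj2) (simp add: wu lin_props(1)[OF I1(1)] lin_props(1)[OF I2(1)] lin_props(1)[OF W(1)])
    show "wu (scl K1 c x) = scl K2 c (wu x)" for c x
      by (rule inj2) (simp add: wu lin_props(2)[OF I1(1)] lin_props(2)[OF I2(1)] lin_props(2)[OF W(1)])
  qed
  obtain g where lg: "Vector_Spaces.linear (scl A2) (scl K2) g" and g: "g \<circ> \<iota>2 = id"
    using vector_space_pair.linear_injective_left_inverse[OF _ I2(1) E2(6)]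
      hopfD(1)[OF E2(1)] hopfD(1)[OF E2(2)]
    unfolding vector_space_pair_def by blast
  have gi: "g (\<iota>2 x) = x" for x using g by (metis comp_apply id_apply)
  have hwu: "hopf_map K1 K2 wu"
    unfolding hopf_map_def
  proof (intro conjI allI lwu)
    show "wu (x * y) = wu x * wu y" for x y by (rule inj2) (simp add: wu I1(2) I2(2) W(2))
    show "wu 1 = 1" by (rule inj2) (simp add: wu I1(3) I2(3) W(3))
    show "cnt K2 (wu x) = cnt K1 x" for x by (metis I2(5) wu W(5) I1(5))
    show "tensor_eq (scl K2) (scl K2) (cmul K2 (wu x)) (map (\<lambda>(a, b). (wu a, wu b)) (cmul K1 x))" for x
    proof -
      let ?m = "\<lambda>f xs. map (\<lambda>(a, b). (f a, f b)) xs"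
      have t1: "tensor_eq (scl K2) (scl K2) (?m g (cmul A2 (\<iota>2 (wu x)))) (?m g (?m \<iota>2 (cmul K2 (wu x))))"
        by (rule tensor_eq_map[OF lg lg I2(4)])
      have t1': "tensor_eq (scl K2) (scl K2) (cmul K2 (wu x)) (?m g (cmul A2 (\<iota>2 (wu x))))"
        using tensor_eq_sym[OF t1] unfolding map_map_pair gi by (simp add: case_prod_beta')
      have t2: "tensor_eq (scl A2) (scl A2) (cmul A2 (\<omega> (\<iota>1 x))) (?m \<omega> (?m \<iota>1 (cmul K1 x)))"
        by (rule tensor_eq_trans[OF W(4) tensor_eq_map[OF W(1) W(1) I1(4)]])
      have t3: "tensor_eq (scl K2) (scl K2) (?m g (cmul A2 (\<iota>2 (wu x)))) (?m g (?m \<omega> (?m \<iota>1 (cmul K1 x))))"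
        unfolding wu by (rule tensor_eq_map[OF lg lg t2])
      have e: "?m g (?m \<omega> (?m \<iota>1 (cmul K1 x))) = ?m wu (cmul K1 x)"
        unfolding map_map_pair wu[symmetric] gi ..
      show ?thesis using tensor_eq_trans[OF t1' t3] unfolding e .
    qed
  qed
  have bwu: "bij wu"
  proof (rule bijI)
    show "inj wu"
    proof (rule injI)
      fix x y assume "wu x = wu y"
      then have "\<omega> (\<iota>1 x) = \<omega> (\<iota>1 y)" using wu by metis
      then show "x = y" using bw E1(6) by (metis bij_is_inj inj_eq)
    qed
    have "y \<in> range wu" for y
    proof -
      have "inv \<omega> (\<iota>2 y) \<in> range \<iota>1" using sub2 by blast
      then obtain k where k: "inv \<omega> (\<iota>2 y) = \<iota>1 k" by blast
      have "\<iota>2 (wu k) = \<iota>2 y" using wu[of k] k fi by metis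
      then have "wu k = y" by (rule inj2)
      then show ?thesis by (metis rangeI)
    qed
    then show "surj wu" by blast
  qed
  define wo where "wo = (\<lambda>h. \<pi>2 (\<omega> (inv \<pi>1 h)))"
  have p1i: "\<pi>1 (inv \<pi>1 h) = h" for h using E1(7) by (simp add: surj_f_inv_f)
  have wo: "wo (\<pi>1 a) = \<pi>2 (\<omega> a)" for a
    unfolding wo_def by (rule wd[OF ex1 ex2 hw sub1]) (rule p1i)
  note P1 = hmapD[OF E1(5)] and P2 = hmapD[OF E2(5)]
  have lwo: "Vector_Spaces.linear (scl H1) (scl H2) wo"
  proof (rule linI[OF hopfD(1)[OF E1(3)] hopfD(1)[OF E2(3)]])
    show "wo (x + y) = wo x + wo y" for x y
      by (metis p1i wo lin_props(1)[OF P1(1)] lin_props(1)[OF P2(1)] lin_props(1)[OF W(1)])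
    show "wo (scl H1 c x) = scl H2 c (wo x)" for c x
      by (metis p1i wo lin_props(2)[OF P1(1)] lin_props(2)[OF P2(1)] lin_props(2)[OF W(1)])
  qed
  have hwo: "hopf_map H1 H2 wo"
    unfolding hopf_map_def
  proof (intro conjI allI lwo)
    show "wo (x * y) = wo x * wo y" for x y by (metis p1i wo P1(2) P2(2) W(2))
    show "wo 1 = 1" by (metis wo P1(3) P2(3) W(3))
    show "cnt H2 (wo x) = cnt H1 x" for x by (metis p1i wo P1(5) P2(5) W(5))
    show "tensor_eq (scl H2) (scl H2) (cmul H2 (wo h)) (map (\<lambda>(a, b). (wo a, wo b)) (cmul H1 h))" for h
    proof -
      let ?m = "\<lambda>f xs. map (\<lambda>(a, b). (f a, f b)) xs"
      obtain a where a: "h = \<pi>1 a" by (metis p1i)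
      have t1: "tensor_eq (scl H2) (scl H2) (cmul H2 (\<pi>2 (\<omega> a))) (?m \<pi>2 (?m \<omega> (cmul A1 a)))"
        by (rule tensor_eq_trans[OF P2(4) tensor_eq_map[OF P2(1) P2(1) W(4)]])
      have t2: "tensor_eq (scl H2) (scl H2) (?m wo (?m \<pi>1 (cmul A1 a))) (?m wo (cmul H1 (\<pi>1 a)))"
        by (rule tensor_eq_map[OF lwo lwo tensor_eq_sym[OF P1(4)]])
      have e: "?m wo (?m \<pi>1 (cmul A1 a)) = ?m \<pi>2 (?m \<omega> (cmul A1 a))"
        unfolding map_map_pair wo ..
      show ?thesis using tensor_eq_trans[OF t1 t2[unfolded e]] unfolding a wo .
    qed
  qed
  have bwo: "bij wo"
  proof (rule bijI)
    show "inj wo"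
    proof (rule injI)
      fix x y assume xy: "wo x = wo y"
      obtain a where a: "x = \<pi>1 a" by (metis p1i)
      obtain b where b: "y = \<pi>1 b" by (metis p1i)
      have "\<pi>2 (\<omega> a) = \<pi>2 (\<omega> b)" using xy a b wo by metis
      then have "\<pi>1 (inv \<omega> (\<omega> a)) = \<pi>1 (inv \<omega> (\<omega> b))" by (rule wd[OF ex2 ex1 hw' sub2])
      then show "x = y" using a b if_ by metis
    qed
    have "y \<in> range wo" for y
    proof -
      obtain a2 where "y = \<pi>2 a2" using E2(7) by blast
      then have "wo (\<pi>1 (inv \<omega> a2)) = y" using wo fi by metis
      then show ?thesis by (metis rangeI)
    qed
    then show "surj wo" by blast
  qed
  have c1': "\<iota>2 \<circ> wu = \<omega> \<circ> \<iota>1" using wu by (simp add: fun_eq_iff)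
  have c2': "\<pi>2 \<circ> \<omega> = wo \<circ> \<pi>1" using wo by (simp add: fun_eq_iff)
  show ?thesis
    using hwu bwu hwo bwo c1' c2' unfolding hopf_iso_def by blast
qed

end
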